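(* Let $a\in\mathbb{R}$, $h>0$, $b=a+kh$ with $k\ge2$, $\mathbb{T}=\{a,a+h,\dots,b\}$, and let $L(t,u,v):\mathbb{T}^\kappa\times\mathbb{R}^2\to\mathbb{R}$ have continuous second partial derivatives in $(u,v)$. If $\hat y$ is a local minimizer of $$\mathcal{L}(y)=\int_a^bL(t,y(\sigma(t)),y^\Delta(t))\Delta t\to\min,\qquad y(a)=A,\ y(b)=B,$$ (local with respect to the norm $\|y\|=\max_{\mathbb{T}^\kappa}|y(\sigma(t))|+\max_{\mathbb{T}^\kappa}|y^\Delta(t)|$), then for all $t\in\mathbb{T}^{\kappa^2}$, $$h^2L_{uu}[\hat y](t)+2hL_{uv}[\hat y](t)+L_{vv}[\hat y](t)+L_{vv}[\hat y](\sigma(t))\ge0,$$ where $[\hat y](t)=(t,\hat y(\sigma(t)),\hat y^\Delta(t))$.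
   Context: $\mathbb{T}^\kappa=\mathbb{T}\setminus\{b\}$, $\mathbb{T}^{\kappa^2}=\mathbb{T}\setminus\{b-h,b\}$, $\sigma(t)=t+h$, $y^\Delta(t)=(y(t+h)-y(t))/h$, and $\int_a^bG(t)\Delta t:=h\sum_{j=0}^{k-1}G(a+jh)$. A function $\hat y$ with $\hat y(a)=A$, $\hat y(b)=B$ is a local minimizer if there is $\delta>0$ such that $\mathcal{L}(\hat y)\le\mathcal{L}(y)$ for all $y:\mathbb{T}\to\mathbb{R}$ with $y(a)=A$, $y(b)=B$ and $\|y-\hat y\|<\delta$. *)

theory Defs
  imports "HOL-Analysis.Analysis"
begin

definition Tset :: "real \<Rightarrow> real \<Rightarrow> nat \<Rightarrow> real set" where
  "Tset a h k = {a + real j * h | j. j \<le> k}"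

definition Tkappa :: "real \<Rightarrow> real \<Rightarrow> nat \<Rightarrow> real set" where
  "Tkappa a h k = {a + real j * h | j. j < k}"

definition Tkappa2 :: "real \<Rightarrow> real \<Rightarrow> nat \<Rightarrow> real set" where
  "Tkappa2 a h k = {a + real j * h | j. j + 1 < k}"

definition sigma :: "real \<Rightarrow> real \<Rightarrow> real" where
  "sigma h t = t + h"

definition delta_deriv :: "real \<Rightarrow> (real \<Rightarrow> real) \<Rightarrow> real \<Rightarrow> real" where
  "delta_deriv h y t = (y (t + h) - y t) / h"

definition delta_int :: "real \<Rightarrow> real \<Rightarrow> nat \<Rightarrow> (real \<Rightarrow> real) \<Rightarrow> real" where
  "delta_int a h k G = h * (\<Sum>j<k. G (a + real j * h))"

definition functional :: "real \<Rightarrow> real \<Rightarrow> nat \<Rightarrow> (real \<Rightarrow> real \<Rightarrow> real \<Rightarrow> real)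
    \<Rightarrow> (real \<Rightarrow> real) \<Rightarrow> real" where
  "functional a h k L y = delta_int a h k (\<lambda>t. L t (y (sigma h t)) (delta_deriv h y t))"

definition ts_norm :: "real \<Rightarrow> real \<Rightarrow> nat \<Rightarrow> (real \<Rightarrow> real) \<Rightarrow> real" where
  "ts_norm a h k y = Max ((\<lambda>t. \<bar>y (sigma h t)\<bar>) ` Tkappa a h k)
                   + Max ((\<lambda>t. \<bar>delta_deriv h y t\<bar>) ` Tkappa a h k)"

definition local_minimizer :: "real \<Rightarrow> real \<Rightarrow> nat \<Rightarrow> (real \<Rightarrow> real \<Rightarrow> real \<Rightarrow> real)
    \<Rightarrow> real \<Rightarrow> real \<Rightarrow> (real \<Rightarrow> real) \<Rightarrow> bool" where
  "local_minimizer a h k L A B yh \<longleftrightarrow>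
     yh a = A \<and> yh (a + real k * h) = B \<and>
     (\<exists>\<delta>>0. \<forall>y. y a = A \<and> y (a + real k * h) = B \<and>
        ts_norm a h k (\<lambda>t. y t - yh t) < \<delta> \<longrightarrow>
        functional a h k L yh \<le> functional a h k L y)"

end

theory Submission imports Defs begin

lemma chain2:
  fixes F Fu Fv :: "real \<Rightarrow> real \<Rightarrow> real"
  assumes dF: "\<And>u v. ((\<lambda>(p::real \<times> real). F (fst p) (snd p)) has_derivative
          (\<lambda>d. Fu u v * fst d + Fv u v * snd d)) (at (u, v))"
  shows "((\<lambda>e. F (u + e*p) (v + e*q)) has_real_derivative
           (Fu (u+x*p) (v+x*q) * p + Fv (u+x*p) (v+x*q) * q)) (at x)"
proof -
  have g: "((\<lambda>e. (u + e*p, v + e*q)) has_derivative (\<lambda>d. (d*p, d*q))) (at x)"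
    by (auto intro!: derivative_eq_intros)
  have "((\<lambda>(p::real \<times> real). F (fst p) (snd p)) \<circ> (\<lambda>e. (u + e*p, v + e*q)) has_derivative
     (\<lambda>d. Fu (u+x*p) (v+x*q) * fst d + Fv (u+x*p) (v+x*q) * snd d) \<circ> (\<lambda>d. (d*p, d*q))) (at x)"
    by (rule diff_chain_at[OF g dF])
  hence "((\<lambda>e. F (u + e*p) (v + e*q)) has_derivative
     (\<lambda>d. Fu (u+x*p) (v+x*q) * (d*p) + Fv (u+x*p) (v+x*q) * (d*q))) (at x)"
    by (simp add: o_def)
  then show ?thesis
    unfolding has_field_derivative_def
    by (rule has_derivative_eq_rhs) (auto simp: fun_eq_iff algebra_simps)
qed

lemma du1:
  fixes F Fu Fv :: "real \<Rightarrow> real \<Rightarrow> real"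
  assumes dF: "\<And>u v. ((\<lambda>(p::real \<times> real). F (fst p) (snd p)) has_derivative
          (\<lambda>d. Fu u v * fst d + Fv u v * snd d)) (at (u, v))"
  shows "((\<lambda>x. F x w) has_real_derivative Fu x w) (at x)"
  using chain2[OF dF, of 0 1 w 0 x] by simp

lemma dv1:
  fixes F Fu Fv :: "real \<Rightarrow> real \<Rightarrow> real"
  assumes dF: "\<And>u v. ((\<lambda>(p::real \<times> real). F (fst p) (snd p)) has_derivative
          (\<lambda>d. Fu u v * fst d + Fv u v * snd d)) (at (u, v))"
  shows "((\<lambda>y. F w y) has_real_derivative Fv w y) (at y)"
  using chain2[OF dF, of w 0 0 1 y] by simp

lemma second_order:
  fixes \<phi> \<phi>' :: "real \<Rightarrow> real"
  assumes d1: "\<And>x. (\<phi> has_real_derivative \<phi>' x) (at x)"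
    and d2: "(\<phi>' has_real_derivative D) (at 0)"
    and d: "d > 0" and mn: "\<And>x. \<bar>x\<bar> < d \<Longrightarrow> \<phi> 0 \<le> \<phi> x"
  shows "D \<ge> 0"
proof (rule ccontr)
  assume "\<not> D \<ge> 0"
  hence D: "D < 0" by simp
  have z: "\<phi>' 0 = 0"
    by (rule DERIV_local_min[OF d1 d]) (auto intro: mn)
  obtain d2 where d2p: "d2 > 0" and lt: "\<forall>x>0. x < d2 \<longrightarrow> \<phi>' 0 > \<phi>' (0 + x)"
    using DERIV_neg_dec_right[OF d2 D] by blast
  define x where "x = min d d2 / 2"
  have x: "0 < x" "x < d" "x < d2" using d d2p by (auto simp: x_def)
  obtain z where zz: "0 < z" "z < x" "\<phi> x - \<phi> 0 = (x - 0) * \<phi>' z"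
    using MVT2[OF x(1), of \<phi> \<phi>'] d1 by auto
  have "\<phi>' z < 0" using lt zz x z by auto
  hence "x * \<phi>' z < 0" using x by (simp add: mult_pos_neg)
  hence "\<phi> x < \<phi> 0" using zz by simp
  moreover have "\<phi> 0 \<le> \<phi> x" using mn x by auto
  ultimately show False by simp
qed

lemma symm:
  fixes F Fu Fv Fuu Fuv Fvu Fvv :: "real \<Rightarrow> real \<Rightarrow> real"
  assumes dF: "\<And>u v. ((\<lambda>(p::real \<times> real). F (fst p) (snd p)) has_derivative
          (\<lambda>d. Fu u v * fst d + Fv u v * snd d)) (at (u, v))"
    and dFu: "\<And>u v. ((\<lambda>(p::real \<times> real). Fu (fst p) (snd p)) has_derivative
          (\<lambda>d. Fuu u v * fst d + Fuv u v * snd d)) (at (u, v))"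
    and dFv: "\<And>u v. ((\<lambda>(p::real \<times> real). Fv (fst p) (snd p)) has_derivative
          (\<lambda>d. Fvu u v * fst d + Fvv u v * snd d)) (at (u, v))"
    and cuv: "continuous_on UNIV (\<lambda>(p::real \<times> real). Fuv (fst p) (snd p))"
    and cvu: "continuous_on UNIV (\<lambda>(p::real \<times> real). Fvu (fst p) (snd p))"
  shows "Fuv u v = Fvu u v"
proof (rule ccontr)
  assume ne: "Fuv u v \<noteq> Fvu u v"
  define e where "e = \<bar>Fuv u v - Fvu u v\<bar> / 3"
  have e: "e > 0" using ne by (simp add: e_def)
  obtain d1 where d1: "d1 > 0" and c1: "\<And>x'. dist x' (u,v) < d1 \<Longrightarrow>
      dist (Fuv (fst x') (snd x')) (Fuv u v) < e"
    using cuv e unfolding continuous_on_iff by (metis UNIV_I fst_conv snd_conv)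
  obtain d2 where d2: "d2 > 0" and c2: "\<And>x'. dist x' (u,v) < d2 \<Longrightarrow>
      dist (Fvu (fst x') (snd x')) (Fvu u v) < e"
    using cvu e unfolding continuous_on_iff by (metis UNIV_I fst_conv snd_conv)
  define s where "s = min d1 d2 / 2"
  have s: "s > 0" using d1 d2 by (simp add: s_def)
  have close: "dist (a,b) (u,v) < min d1 d2" if "u < a" "a < u+s" "v < b" "b < v + s" for a b
  proof -
    have "dist (a,b) (u,v) \<le> \<bar>a - u\<bar> + \<bar>b - v\<bar>"
      unfolding dist_Pair_Pair dist_real_def using sqrt_sum_squares_le_sum_abs[of "a-u" "b-v"] by simp
    also have "\<dots> < 2 * s" using that by simp
    finally show ?thesis by (simp add: s_def)
  qed
  obtain \<xi> where xi: "u < \<xi>" "\<xi> < u + s"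
    "(F (u+s) (v+s) - F (u+s) v) - (F u (v+s) - F u v) = (u + s - u) * (Fu \<xi> (v+s) - Fu \<xi> v)"
    using MVT2[of u "u+s" "\<lambda>x. F x (v+s) - F x v" "\<lambda>x. Fu x (v+s) - Fu x v", OF _ DERIV_diff[OF du1[OF dF] du1[OF dF]]] s by auto
  obtain \<eta> where eta: "v < \<eta>" "\<eta> < v + s"
    "Fu \<xi> (v+s) - Fu \<xi> v = (v + s - v) * Fuv \<xi> \<eta>"
    using MVT2[of v "v+s" "\<lambda>y. Fu \<xi> y" "\<lambda>y. Fuv \<xi> y", OF _ dv1[OF dFu]] s by auto
  obtain \<eta>' where eta': "v < \<eta>'" "\<eta>' < v + s"
    "(F (u+s) (v+s) - F u (v+s)) - (F (u+s) v - F u v) = (v + s - v) * (Fv (u+s) \<eta>' - Fv u \<eta>')"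
    using MVT2[of v "v+s" "\<lambda>y. F (u+s) y - F u y" "\<lambda>y. Fv (u+s) y - Fv u y", OF _ DERIV_diff[OF dv1[OF dF] dv1[OF dF]]] s by auto
  obtain \<xi>' where xi': "u < \<xi>'" "\<xi>' < u + s"
    "Fv (u+s) \<eta>' - Fv u \<eta>' = (u + s - u) * Fvu \<xi>' \<eta>'"
    using MVT2[of u "u+s" "\<lambda>x. Fv x \<eta>'" "\<lambda>x. Fvu x \<eta>'", OF _ du1[OF dFv]] s by auto
  have "s * (s * Fuv \<xi> \<eta>) = s * (s * Fvu \<xi>' \<eta>')"
    using xi(3) eta(3) eta'(3) xi'(3) by (simp add: algebra_simps)
  hence eq: "Fuv \<xi> \<eta> = Fvu \<xi>' \<eta>'" using s by simp
  have "dist (Fuv \<xi> \<eta>) (Fuv u v) < e"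
    using c1[of "(\<xi>, \<eta>)"] close[OF xi(1,2) eta(1,2)] by simp
  moreover have "dist (Fvu \<xi>' \<eta>') (Fvu u v) < e"
    using c2[of "(\<xi>', \<eta>')"] close[OF xi'(1,2) eta'(1,2)] by simp
  ultimately show False using eq unfolding e_def dist_real_def by (simp add: abs_if split: if_splits)
qed

theorem mainTheorem13:
  fixes a h A B :: real and k :: nat
    and L Lu Lv Luu Luv Lvu Lvv :: "real \<Rightarrow> real \<Rightarrow> real \<Rightarrow> real"
    and yh :: "real \<Rightarrow> real"
  assumes h: "h > 0" and k: "k \<ge> 2"
    and dL: "\<And>t u v. t \<in> Tkappa a h k \<Longrightarrow>
       ((\<lambda>(p::real \<times> real). L t (fst p) (snd p)) has_derivative
          (\<lambda>d. Lu t u v * fst d + Lv t u v * snd d)) (at (u, v))"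
    and dLu: "\<And>t u v. t \<in> Tkappa a h k \<Longrightarrow>
       ((\<lambda>(p::real \<times> real). Lu t (fst p) (snd p)) has_derivative
          (\<lambda>d. Luu t u v * fst d + Luv t u v * snd d)) (at (u, v))"
    and dLv: "\<And>t u v. t \<in> Tkappa a h k \<Longrightarrow>
       ((\<lambda>(p::real \<times> real). Lv t (fst p) (snd p)) has_derivative
          (\<lambda>d. Lvu t u v * fst d + Lvv t u v * snd d)) (at (u, v))"
    and cont: "\<And>t. t \<in> Tkappa a h k \<Longrightarrow>
       continuous_on UNIV (\<lambda>(p::real \<times> real). Luu t (fst p) (snd p)) \<and>
       continuous_on UNIV (\<lambda>(p::real \<times> real). Luv t (fst p) (snd p)) \<and>
       continuous_on UNIV (\<lambda>(p::real \<times> real). Lvu t (fst p) (snd p)) \<and>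
       continuous_on UNIV (\<lambda>(p::real \<times> real). Lvv t (fst p) (snd p))"
    and min: "local_minimizer a h k L A B yh"
  shows "\<forall>t \<in> Tkappa2 a h k.
     h^2 * Luu t (yh (sigma h t)) (delta_deriv h yh t)
     + 2 * h * Luv t (yh (sigma h t)) (delta_deriv h yh t)
     + Lvv t (yh (sigma h t)) (delta_deriv h yh t)
     + Lvv (sigma h t) (yh (sigma h (sigma h t))) (delta_deriv h yh (sigma h t)) \<ge> 0"
proof
  fix t0 assume "t0 \<in> Tkappa2 a h k"
  then obtain j where j: "j + 1 < k" and t0: "t0 = a + real j * h" by (auto simp: Tkappa2_def)
  define T where "T i = a + real i * h" for i
  have Ti: "a + real i * h = T i" for i by (simp add: T_def)
  have Tinj: "T i = T m \<longleftrightarrow> i = m" for i m using h by (simp add: T_def)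
  have Tplus: "T i + h = T (Suc i)" for i by (simp add: T_def algebra_simps)
  have Tsig: "sigma h (T i) = T (Suc i)" for i by (simp add: sigma_def Tplus)
  have TK: "T i \<in> Tkappa a h k" if "i < k" for i using that by (auto simp: T_def Tkappa_def)
  have Tk: "Tkappa a h k = T ` {..<k}" by (auto simp: T_def Tkappa_def)
  define s where "s = T (Suc j)"
  define \<eta> where "\<eta> x = (if x = s then 1 else 0::real)" for x
  define P where "P i = (if i = j then 1 else 0::real)" for i
  define Q where "Q i = ((if i = j then 1 else 0) - (if i = Suc j then 1 else 0)) / h" for i
  define U where "U i = yh (sigma h (T i))" for i
  define V where "V i = delta_deriv h yh (T i)" for i
  define \<phi> where "\<phi> x = h * (\<Sum>i<k. L (T i) (U i + x * P i) (V i + x * Q i))" for x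
  define \<phi>' where "\<phi>' x = h * (\<Sum>i<k. Lu (T i) (U i + x * P i) (V i + x * Q i) * P i
       + Lv (T i) (U i + x * P i) (V i + x * Q i) * Q i)" for x
  define D where "D = h * (\<Sum>i<k.
       (Luu (T i) (U i + 0 * P i) (V i + 0 * Q i) * P i + Luv (T i) (U i + 0 * P i) (V i + 0 * Q i) * Q i) * P i
     + (Lvu (T i) (U i + 0 * P i) (V i + 0 * Q i) * P i + Lvv (T i) (U i + 0 * P i) (V i + 0 * Q i) * Q i) * Q i)"
  have etaT: "\<eta> (T i) = (if i = Suc j then 1 else 0)" for i by (simp add: \<eta>_def s_def Tinj)
  have func: "functional a h k L (\<lambda>x. yh x + e * \<eta> x) = \<phi> e" for e
  proof -
    have "L (T i) (yh (sigma h (T i)) + e * \<eta> (sigma h (T i)))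
            (delta_deriv h (\<lambda>x. yh x + e * \<eta> x) (T i)) = L (T i) (U i + e * P i) (V i + e * Q i)" for i
    proof -
      have "delta_deriv h (\<lambda>x. yh x + e * \<eta> x) (T i) = V i + e * Q i"
        using h unfolding delta_deriv_def V_def Q_def Tplus etaT
        by (simp add: field_simps)
      moreover have "\<eta> (sigma h (T i)) = P i" by (simp add: Tsig etaT P_def)
      ultimately show ?thesis by (simp add: U_def)
    qed
    then show ?thesis unfolding functional_def delta_int_def \<phi>_def Ti by simp
  qed
  have d1: "(\<phi> has_real_derivative \<phi>' x) (at x)" for x
    unfolding \<phi>_def \<phi>'_def
    by (intro DERIV_cmult DERIV_sum chain2[OF dL[OF TK]]) simp
  have d2: "(\<phi>' has_real_derivative D) (at 0)"
    unfolding \<phi>'_def D_def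
    by (intro DERIV_cmult DERIV_sum DERIV_add DERIV_cmult_right chain2[OF dLu[OF TK]] chain2[OF dLv[OF TK]]) simp_all
  obtain \<delta> where \<delta>: "\<delta> > 0" and mn: "\<And>y. y a = A \<and> y (a + real k * h) = B \<and>
        ts_norm a h k (\<lambda>t. y t - yh t) < \<delta> \<Longrightarrow> functional a h k L yh \<le> functional a h k L y"
    and yA: "yh a = A" and yB: "yh (a + real k * h) = B"
    using min unfolding local_minimizer_def by blast
  have fin: "finite (Tkappa a h k)" "Tkappa a h k \<noteq> {}" using k by (auto simp: Tk lessThan_empty_iff)
  have norm: "ts_norm a h k (\<lambda>t. x * \<eta> t) \<le> \<bar>x\<bar> + \<bar>x\<bar> / h" for x
  proof -
    have "Max ((\<lambda>t. \<bar>x * \<eta> (sigma h t)\<bar>) ` Tkappa a h k) \<le> \<bar>x\<bar>"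
      using fin by (subst Max_le_iff) (auto simp: \<eta>_def)
    moreover have "Max ((\<lambda>t. \<bar>delta_deriv h (\<lambda>t. x * \<eta> t) t\<bar>) ` Tkappa a h k) \<le> \<bar>x\<bar> / h"
      using fin h by (subst Max_le_iff) (auto simp: \<eta>_def delta_deriv_def abs_mult)
    ultimately show ?thesis unfolding ts_norm_def by linarith
  qed
  define d where "d = \<delta> * h / (h + 1)"
  have dpos: "d > 0" using \<delta> h by (simp add: d_def)
  have loc: "\<phi> 0 \<le> \<phi> x" if x: "\<bar>x\<bar> < d" for x
  proof -
    have "\<eta> a = 0" using Ti[of 0] by (simp add: \<eta>_def s_def Tinj del: Ti)
    moreover have "\<eta> (a + real k * h) = 0" using j by (simp add: \<eta>_def s_def Tinj Ti)
    moreover have "ts_norm a h k (\<lambda>t. x * \<eta> t) < \<delta>"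
    proof -
      have "\<bar>x\<bar> + \<bar>x\<bar> / h = \<bar>x\<bar> * (h + 1) / h" using h by (simp add: field_simps)
      also have "\<dots> < d * (h + 1) / h" using x h by (simp add: divide_strict_right_mono)
      also have "\<dots> = \<delta>" using h by (simp add: d_def)
      finally show ?thesis using norm[of x] by linarith
    qed
    ultimately have "functional a h k L yh \<le> functional a h k L (\<lambda>t. yh t + x * \<eta> t)"
      using yA yB by (intro mn) simp
    moreover have "functional a h k L yh = \<phi> 0" using func[of 0] by simp
    ultimately show ?thesis using func[of x] by simp
  qed
  have D0: "D \<ge> 0" by (rule second_order[OF d1 d2 dpos loc])
  define g where "g i = (Luu (T i) (U i) (V i) * P i + Luv (T i) (U i) (V i) * Q i) * P i
     + (Lvu (T i) (U i) (V i) * P i + Lvv (T i) (U i) (V i) * Q i) * Q i" for i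
  have "D = h * (\<Sum>i<k. g i)" unfolding D_def g_def by simp
  also have "(\<Sum>i<k. g i) = (\<Sum>i\<in>{j, Suc j}. g i)"
    by (rule sum.mono_neutral_right) (use j in \<open>auto simp: g_def P_def Q_def\<close>)
  also have "\<dots> = g j + g (Suc j)" by simp
  finally have Deq: "D = h * (g j + g (Suc j))" .
  have sym: "Luv (T j) (U j) (V j) = Lvu (T j) (U j) (V j)"
    using cont[OF TK] j by (intro symm[OF dL dLu dLv]) (auto intro: TK)
  have "h^2 * Luu t0 (yh (sigma h t0)) (delta_deriv h yh t0)
     + 2 * h * Luv t0 (yh (sigma h t0)) (delta_deriv h yh t0)
     + Lvv t0 (yh (sigma h t0)) (delta_deriv h yh t0)
     + Lvv (sigma h t0) (yh (sigma h (sigma h t0))) (delta_deriv h yh (sigma h t0)) = h * D"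
    using h sym unfolding Deq g_def P_def Q_def t0 Ti U_def V_def Tsig
    by (simp add: field_simps power2_eq_square)
  then show "h^2 * Luu t0 (yh (sigma h t0)) (delta_deriv h yh t0)
     + 2 * h * Luv t0 (yh (sigma h t0)) (delta_deriv h yh t0)
     + Lvv t0 (yh (sigma h t0)) (delta_deriv h yh t0)
     + Lvv (sigma h t0) (yh (sigma h (sigma h t0))) (delta_deriv h yh (sigma h t0)) \<ge> 0"
    using D0 h by simp
qed

end
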